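(* Let $f\in L^2(\mathbb R^2)$ with $J(f)<+\infty$, and let $(w_n)\subset L^2(\mathbb R^2)$, $(\lambda_n)\subset(0,\infty)$ with $\|w_n\|_{L^2}\to0$ and $\lambda_n\to0^+$. Let $u_n$ be the unique minimizer over $u\in L^2(\mathbb R^2)$ of $\lambda_nJ(u)+\frac12\|u-f-w_n\|^2_{L^2}$. Then $\|u_n-f\|_{L^2}\to0$ and $\mathrm{supp}(Df)\subseteq\liminf_{n\to\infty}\mathrm{supp}(Du_n)$.
   Context: $J$ is the total variation on $\mathbb R^2$. For sets $S_n\subseteq\mathbb R^2$, the Painlevé–Kuratowski inner limit is $\liminf_n S_n=\{x: \limsup_n\mathrm{dist}(x,S_n)=0\}$ and the outer limit is $\limsup_n S_n=\{x:\liminf_n\mathrm{dist}(x,S_n)=0\}$. *)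

theory Defs
  imports "HOL-Analysis.Analysis"
begin

type_synonym R2 = "real \<times> real"

definition L2 :: "(R2 \<Rightarrow> real) \<Rightarrow> bool" where
  "L2 u \<longleftrightarrow> u \<in> borel_measurable lebesgue \<and> integrable lebesgue (\<lambda>x. (u x)\<^sup>2)"

definition L2norm :: "(R2 \<Rightarrow> real) \<Rightarrow> real" where
  "L2norm u = sqrt (LINT x|lebesgue. (u x)\<^sup>2)"

definition C1c :: "(R2 \<Rightarrow> R2) \<Rightarrow> bool" where
  "C1c \<phi> \<longleftrightarrow> (\<exists>D. (\<forall>x. (\<phi> has_derivative D x) (at x)) \<and> (\<forall>v. continuous_on UNIV (\<lambda>x. D x v)))
             \<and> compact (closure {x. \<phi> x \<noteq> 0})"

definition divg :: "(R2 \<Rightarrow> R2) \<Rightarrow> R2 \<Rightarrow> real" where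
  "divg \<phi> x = fst (frechet_derivative \<phi> (at x) (1, 0)) + snd (frechet_derivative \<phi> (at x) (0, 1))"

definition TV_on :: "R2 set \<Rightarrow> (R2 \<Rightarrow> real) \<Rightarrow> ereal" where
  "TV_on U u = (SUP \<phi> \<in> {\<phi>. C1c \<phi> \<and> closure {x. \<phi> x \<noteq> 0} \<subseteq> U \<and> (\<forall>x. norm (\<phi> x) \<le> 1)}.
                  ereal (LINT x|lebesgue. u x * divg \<phi> x))"

definition J :: "(R2 \<Rightarrow> real) \<Rightarrow> ereal" where
  "J u = TV_on UNIV u"

definition suppD :: "(R2 \<Rightarrow> real) \<Rightarrow> R2 set" where
  "suppD u = UNIV - \<Union>{U. open U \<and> TV_on U u = 0}"

text \<open>Painleve-Kuratowski inner limit: limsup_n dist(x,S_n) = 0 (dist to empty set = +infinity).\<close>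
definition PK_liminf :: "(nat \<Rightarrow> R2 set) \<Rightarrow> R2 set" where
  "PK_liminf S = {x. \<forall>e>0. eventually (\<lambda>n. \<exists>y\<in>S n. dist x y < e) sequentially}"

definition is_minimizer :: "real \<Rightarrow> (R2 \<Rightarrow> real) \<Rightarrow> (R2 \<Rightarrow> real) \<Rightarrow> bool" where
  "is_minimizer lam g u \<longleftrightarrow> L2 u \<and>
     (\<forall>v. L2 v \<longrightarrow> ereal lam * J u + ereal ((L2norm (\<lambda>x. u x - g x))\<^sup>2 / 2)
                    \<le> ereal lam * J v + ereal ((L2norm (\<lambda>x. v x - g x))\<^sup>2 / 2))"

end

theory Submission
  imports Defs
begin


lemma cont_meas_leb:
  fixes g :: "R2 \<Rightarrow> real"
  assumes "continuous_on UNIV g"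
  shows "g \<in> borel_measurable lebesgue"
proof -
  have "g \<in> borel_measurable lborel"
    using borel_measurable_continuous_onI[OF assms] measurable_cong_sets[OF sets_lborel refl] by blast
  thus ?thesis by (rule measurable_completion)
qed

lemma cont_compact_L2:
  fixes g :: "R2 \<Rightarrow> real"
  assumes "continuous_on UNIV g" "compact K" "\<And>x. x \<notin> K \<Longrightarrow> g x = 0"
  shows "L2 g"
proof -
  have c2: "continuous_on UNIV (\<lambda>x. (g x)^2)" using assms(1) by (intro continuous_intros)
  have "integrable lborel (\<lambda>x. indicator K x *\<^sub>R (g x)^2)"
    using assms(2) c2 by (intro borel_integrable_compact) (auto intro: continuous_on_subset)
  moreover have "(\<lambda>x. indicator K x *\<^sub>R (g x)^2) = (\<lambda>x. (g x)^2)"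
    using assms(3) by (auto simp: indicator_def fun_eq_iff)
  ultimately have "integrable lborel (\<lambda>x. (g x)^2)" by simp
  moreover have "(\<lambda>x. (g x)^2) \<in> borel_measurable lborel"
    using borel_measurable_continuous_onI[OF c2] measurable_cong_sets[OF sets_lborel refl] by blast
  ultimately have "integrable lebesgue (\<lambda>x. (g x)^2)"
    using integrable_completion by blast
  thus ?thesis unfolding L2_def using cont_meas_leb[OF assms(1)] by simp
qed

lemma L2_mult_integrable:
  assumes "L2 a" "L2 b"
  shows "integrable lebesgue (\<lambda>x. a x * b x)"
proof (rule Bochner_Integration.integrable_bound)
  show "integrable lebesgue (\<lambda>x. (a x)^2 + (b x)^2)" using assms unfolding L2_def by auto
  show "(\<lambda>x. a x * b x) \<in> borel_measurable lebesgue" using assms unfolding L2_def by auto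
  show "AE x in lebesgue. norm (a x * b x) \<le> norm ((a x)^2 + (b x)^2)"
  proof (intro AE_I2)
    fix x
    have "2 * \<bar>a x * b x\<bar> \<le> (a x)^2 + (b x)^2"
      using sum_squares_bound[of "\<bar>a x\<bar>" "\<bar>b x\<bar>"] by (simp add: abs_mult power2_eq_square)
    thus "norm (a x * b x) \<le> norm ((a x)^2 + (b x)^2)" by simp
  qed
qed

lemma L2_diff:
  assumes "L2 a" "L2 b"
  shows "L2 (\<lambda>x. a x - b x)"
proof -
  have "integrable lebesgue (\<lambda>x. (a x)^2 + (b x)^2 - 2 * (a x * b x))"
    using assms L2_mult_integrable unfolding L2_def by auto
  moreover have "(\<lambda>x. (a x)^2 + (b x)^2 - 2 * (a x * b x)) = (\<lambda>x. (a x - b x)^2)"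
    by (auto simp: fun_eq_iff power2_eq_square algebra_simps)
  ultimately show ?thesis using assms unfolding L2_def by auto
qed

lemma L2_add:
  assumes "L2 a" "L2 b"
  shows "L2 (\<lambda>x. a x + b x)"
proof -
  have "integrable lebesgue (\<lambda>x. (a x)^2 + (b x)^2 + 2 * (a x * b x))"
    using assms L2_mult_integrable unfolding L2_def by auto
  moreover have "(\<lambda>x. (a x)^2 + (b x)^2 + 2 * (a x * b x)) = (\<lambda>x. (a x + b x)^2)"
    by (auto simp: fun_eq_iff power2_eq_square algebra_simps)
  ultimately show ?thesis using assms unfolding L2_def by auto
qed

lemma L2norm_sq: "(L2norm u)^2 = (LINT x|lebesgue. (u x)^2)"
  unfolding L2norm_def by (simp add: integral_nonneg_AE)

lemma L2_sq_diff_bound: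
  assumes "L2 a" "L2 b"
  shows "(LINT x|lebesgue. (a x - b x)^2) \<le> 2 * (LINT x|lebesgue. (a x)^2) + 2 * (LINT x|lebesgue. (b x)^2)"
proof -
  have "(LINT x|lebesgue. (a x - b x)^2) \<le> (LINT x|lebesgue. 2 * (a x)^2 + 2 * (b x)^2)"
  proof (rule integral_mono)
    show "integrable lebesgue (\<lambda>x. (a x - b x)^2)" using L2_diff[OF assms] unfolding L2_def by auto
    show "integrable lebesgue (\<lambda>x. 2 * (a x)^2 + 2 * (b x)^2)" using assms unfolding L2_def by auto
    fix x show "(a x - b x)^2 \<le> 2 * (a x)^2 + 2 * (b x)^2"
      using sum_squares_bound[of "a x" "-b x"] by (simp add: power2_eq_square algebra_simps)
  qed
  also have "\<dots> = 2 * (LINT x|lebesgue. (a x)^2) + 2 * (LINT x|lebesgue. (b x)^2)"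
    using assms unfolding L2_def by simp
  finally show ?thesis .
qed

lemma amgm:
  fixes a b s :: real assumes "s > 0"
  shows "\<bar>a * b\<bar> \<le> s/2 * a^2 + 1/(2 * s) * b^2"
proof -
  have "0 \<le> (s * \<bar>a\<bar> - \<bar>b\<bar>)^2" by simp
  hence h: "2 * s * (\<bar>a\<bar> * \<bar>b\<bar>) \<le> s^2 * a^2 + b^2"
    by (simp add: power2_diff power_mult_distrib)
  have "s/2 * a^2 + 1/(2 * s) * b^2 = (s^2 * a^2 + b^2) / (2 * s)"
    using assms by (simp add: field_simps power2_eq_square)
  moreover have "\<bar>a\<bar> * \<bar>b\<bar> \<le> (s^2 * a^2 + b^2) / (2 * s)"
    using h assms by (simp add: pos_le_divide_eq mult.commute mult.left_commute)
  ultimately show ?thesis by (simp add: abs_mult)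
qed
lemma L2_CS:
  assumes "L2 a" "L2 b" "s > 0"
  shows "\<bar>(LINT x|lebesgue. a x * b x)\<bar> \<le> s/2 * (LINT x|lebesgue. (a x)^2) + 1/(2 * s) * (LINT x|lebesgue. (b x)^2)"
proof -
  have "\<bar>(LINT x|lebesgue. a x * b x)\<bar> \<le> (LINT x|lebesgue. \<bar>a x * b x\<bar>)"
    by (rule integral_abs_bound)
  also have "\<dots> \<le> (LINT x|lebesgue. s/2 * (a x)^2 + 1/(2 * s) * (b x)^2)"
  proof (rule integral_mono)
    show "integrable lebesgue (\<lambda>x. \<bar>a x * b x\<bar>)" using L2_mult_integrable[OF assms(1,2)] by auto
    show "integrable lebesgue (\<lambda>x. s/2 * (a x)^2 + 1/(2 * s) * (b x)^2)" using assms unfolding L2_def by auto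
    fix x show "\<bar>a x * b x\<bar> \<le> s/2 * (a x)^2 + 1/(2 * s) * (b x)^2" using amgm[OF assms(3)] .
  qed
  also have "\<dots> = s/2 * (LINT x|lebesgue. (a x)^2) + 1/(2 * s) * (LINT x|lebesgue. (b x)^2)"
    using assms unfolding L2_def by simp
  finally show ?thesis .
qed



definition C1 :: "(R2 \<Rightarrow> 'b::real_normed_vector) \<Rightarrow> bool" where
  "C1 g \<longleftrightarrow> (\<exists>D. (\<forall>x. (g has_derivative D x) (at x)) \<and> (\<forall>v. continuous_on UNIV (\<lambda>x. D x v)))"

lemma C1c_iff: "C1c \<phi> \<longleftrightarrow> C1 \<phi> \<and> compact (closure {x. \<phi> x \<noteq> 0})"
  unfolding C1c_def C1_def by simp

lemma C1_cont: "C1 g \<Longrightarrow> continuous_on UNIV g"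
proof -
  assume "C1 g"
  then obtain D where D: "\<And>x. (g has_derivative D x) (at x)" unfolding C1_def by blast
  show ?thesis by (intro continuous_at_imp_continuous_on ballI has_derivative_continuous[OF D])
qed

lemma C1_const: "C1 (\<lambda>x. c)"
  unfolding C1_def by (rule exI[of _ "\<lambda>x h. 0"]) (simp add: has_derivative_const)

lemma C1_scaleR:
  fixes a :: "R2 \<Rightarrow> real" and g :: "R2 \<Rightarrow> 'b::real_normed_vector"
  assumes "C1 a" "C1 g"
  shows "C1 (\<lambda>x. a x *\<^sub>R g x)"
proof -
  obtain Da where Da: "\<And>x. (a has_derivative Da x) (at x)" "\<And>v. continuous_on UNIV (\<lambda>x. Da x v)"
    using assms(1) unfolding C1_def by blast
  obtain Dg where Dg: "\<And>x. (g has_derivative Dg x) (at x)" "\<And>v. continuous_on UNIV (\<lambda>x. Dg x v)"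
    using assms(2) unfolding C1_def by blast
  have ca: "continuous_on UNIV a" and cg: "continuous_on UNIV g" using assms C1_cont by auto
  show ?thesis unfolding C1_def
  proof (intro exI[of _ "\<lambda>x h. a x *\<^sub>R Dg x h + Da x h *\<^sub>R g x"] conjI allI)
    fix x show "((\<lambda>x. a x *\<^sub>R g x) has_derivative (\<lambda>h. a x *\<^sub>R Dg x h + Da x h *\<^sub>R g x)) (at x)"
      using has_derivative_scaleR[OF Da(1) Dg(1)] .
  next
    fix v show "continuous_on UNIV (\<lambda>x. a x *\<^sub>R Dg x v + Da x v *\<^sub>R g x)"
      using ca cg Da(2) Dg(2) by (intro continuous_intros) auto
  qed
qed

lemma C1_diff:
  fixes f g :: "R2 \<Rightarrow> 'b::real_normed_vector"
  assumes "C1 f" "C1 g"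
  shows "C1 (\<lambda>x. f x - g x)"
proof -
  obtain Df where Df: "\<And>x. (f has_derivative Df x) (at x)" "\<And>v. continuous_on UNIV (\<lambda>x. Df x v)"
    using assms(1) unfolding C1_def by blast
  obtain Dg where Dg: "\<And>x. (g has_derivative Dg x) (at x)" "\<And>v. continuous_on UNIV (\<lambda>x. Dg x v)"
    using assms(2) unfolding C1_def by blast
  show ?thesis unfolding C1_def
    by (intro exI[of _ "\<lambda>x h. Df x h - Dg x h"] conjI allI has_derivative_diff Df Dg continuous_intros)
qed

lemma C1_add:
  fixes f g :: "R2 \<Rightarrow> 'b::real_normed_vector"
  assumes "C1 f" "C1 g"
  shows "C1 (\<lambda>x. f x + g x)"
proof -
  obtain Df where Df: "\<And>x. (f has_derivative Df x) (at x)" "\<And>v. continuous_on UNIV (\<lambda>x. Df x v)"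
    using assms(1) unfolding C1_def by blast
  obtain Dg where Dg: "\<And>x. (g has_derivative Dg x) (at x)" "\<And>v. continuous_on UNIV (\<lambda>x. Dg x v)"
    using assms(2) unfolding C1_def by blast
  show ?thesis unfolding C1_def
    by (intro exI[of _ "\<lambda>x h. Df x h + Dg x h"] conjI allI has_derivative_add Df Dg continuous_intros)
qed

lemma C1_divide:
  fixes a b :: "R2 \<Rightarrow> real"
  assumes "C1 a" "C1 b" "\<And>x. b x \<noteq> 0"
  shows "C1 (\<lambda>x. a x / b x)"
proof -
  obtain Da where Da: "\<And>x. (a has_derivative Da x) (at x)" "\<And>v. continuous_on UNIV (\<lambda>x. Da x v)"
    using assms(1) unfolding C1_def by blast
  obtain Db where Db: "\<And>x. (b has_derivative Db x) (at x)" "\<And>v. continuous_on UNIV (\<lambda>x. Db x v)"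
    using assms(2) unfolding C1_def by blast
  have ca: "continuous_on UNIV a" and cb: "continuous_on UNIV b" using assms C1_cont by auto
  show ?thesis unfolding C1_def
  proof (intro exI[of _ "\<lambda>x h. - a x * (inverse (b x) * Db x h * inverse (b x)) + Da x h / b x"] conjI allI)
    fix x show "((\<lambda>x. a x / b x) has_derivative (\<lambda>h. - a x * (inverse (b x) * Db x h * inverse (b x)) + Da x h / b x)) (at x)"
      using has_derivative_divide[OF Da(1) Db(1) assms(3)] .
  next
    fix v show "continuous_on UNIV (\<lambda>x. - a x * (inverse (b x) * Db x v * inverse (b x)) + Da x v / b x)"
      using ca cb Da(2) Db(2) assms(3) by (intro continuous_intros) auto
  qed
qed

lemma C1_comp_real:
  fixes q q' :: "real \<Rightarrow> real" and g :: "R2 \<Rightarrow> real"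
  assumes "\<And>t. (q has_real_derivative q' t) (at t)" "continuous_on UNIV q'" "C1 g"
  shows "C1 (\<lambda>x. q (g x))"
proof -
  obtain Dg where Dg: "\<And>x. (g has_derivative Dg x) (at x)" "\<And>v. continuous_on UNIV (\<lambda>x. Dg x v)"
    using assms(3) unfolding C1_def by blast
  have cg: "continuous_on UNIV g" using assms C1_cont by auto
  show ?thesis unfolding C1_def
  proof (intro exI[of _ "\<lambda>x h. q' (g x) * Dg x h"] conjI allI)
    fix x
    have "(q has_derivative (\<lambda>h. q' (g x) * h)) (at (g x))"
      using assms(1)[of "g x"] unfolding has_field_derivative_def .
    thus "((\<lambda>x. q (g x)) has_derivative (\<lambda>h. q' (g x) * Dg x h)) (at x)"
      using has_derivative_compose[OF Dg(1)] by blast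
  next
    fix v show "continuous_on UNIV (\<lambda>x. q' (g x) * Dg x v)"
      using cg Dg(2) assms(2) by (intro continuous_intros continuous_on_compose2[OF assms(2)]) auto
  qed
qed

definition qf :: "real \<Rightarrow> real" where "qf t = (if t \<le> 0 then 0 else t^2)"

lemma qf_deriv: "(qf has_real_derivative (2 * max 0 t)) (at t)"
proof -
  have "((\<lambda>t. if t \<in> {..0} then (\<lambda>_. 0::real) t else (\<lambda>t. t^2) t) has_derivative
      (if t \<in> {..0} then (\<lambda>t. \<lambda>h. 0) t else (\<lambda>t h. 2 * t * h) t)) (at t within ({..0} \<union> {0<..}))"
  proof (rule has_derivative_If_within_closures)
    show "((\<lambda>_. 0::real) has_derivative (\<lambda>h. 0)) (at t within {..0} \<union> (closure {..0} \<inter> closure {0<..}))"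
      by (auto intro: derivative_eq_intros)
    show "((\<lambda>t. t^2) has_derivative (\<lambda>h. 2 * t * h)) (at t within {0<..} \<union> (closure {..0} \<inter> closure {0<..}))"
      by (auto intro!: derivative_eq_intros)
    show "t \<in> closure {..0} \<Longrightarrow> t \<in> closure {0<..} \<Longrightarrow> (0::real) = t^2" by auto
    show "t \<in> closure {..0} \<Longrightarrow> t \<in> closure {0<..} \<Longrightarrow> (\<lambda>h. 0::real) = (\<lambda>h. 2 * t * h)" by auto
    show "t \<in> {..0} \<union> {0<..}" by auto
  qed
  moreover have "{..0} \<union> {0<..} = (UNIV::real set)" by auto
  moreover have "(\<lambda>t. if t \<in> {..0} then (\<lambda>_. 0::real) t else (\<lambda>t. t^2) t) = qf"
    by (auto simp: qf_def fun_eq_iff)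
  moreover have "(if t \<in> {..0} then (\<lambda>t. \<lambda>h. 0) t else (\<lambda>t h. 2 * t * h) t) = (*) (2 * max 0 t)"
    by (auto simp: fun_eq_iff)
  ultimately show ?thesis unfolding has_field_derivative_def by simp
qed

lemma C1_qf: "C1 g \<Longrightarrow> C1 (\<lambda>x. qf (g x))"
  by (rule C1_comp_real[OF qf_deriv]) (intro continuous_intros)

lemma C1_sqdist: "C1 (\<lambda>x::R2. inner (x - y) (x - y))"
  unfolding C1_def
  by (rule exI[of _ "\<lambda>x h. inner h (x - y) + inner (x - y) h"])
     (auto intro!: derivative_eq_intros continuous_intros)

lemma divg_eq:
  assumes "\<And>x. (\<phi> has_derivative D x) (at x)"
  shows "divg \<phi> x = fst (D x (1,0)) + snd (D x (0,1))"
  unfolding divg_def using frechet_derivative_at[OF assms[of x]] by simp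

lemma divg_cont: "C1 \<phi> \<Longrightarrow> continuous_on UNIV (divg \<phi>)"
proof -
  assume "C1 \<phi>"
  then obtain D where D: "\<And>x. (\<phi> has_derivative D x) (at x)" "\<And>v. continuous_on UNIV (\<lambda>x. D x v)"
    unfolding C1_def by blast
  have "divg \<phi> = (\<lambda>x. fst (D x (1,0)) + snd (D x (0,1)))" using divg_eq[OF D(1)] by auto
  thus ?thesis using D(2) by (simp add: continuous_intros)
qed

lemma divg_add:
  assumes "C1 \<phi>" "C1 \<psi>"
  shows "divg (\<lambda>x. \<phi> x + \<psi> x) x = divg \<phi> x + divg \<psi> x"
proof -
  obtain D where D: "\<And>x. (\<phi> has_derivative D x) (at x)"
    using assms(1) unfolding C1_def by blast
  obtain E where E: "\<And>x. (\<psi> has_derivative E x) (at x)"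
    using assms(2) unfolding C1_def by blast
  have "\<And>x. ((\<lambda>x. \<phi> x + \<psi> x) has_derivative (\<lambda>h. D x h + E x h)) (at x)"
    using D E by (intro has_derivative_add)
  from divg_eq[OF this] divg_eq[OF D] divg_eq[OF E] show ?thesis by simp
qed

lemma divg_scale:
  assumes "C1 \<phi>"
  shows "divg (\<lambda>x. c *\<^sub>R \<phi> x) x = c * divg \<phi> x"
proof -
  obtain D where D: "\<And>x. (\<phi> has_derivative D x) (at x)"
    using assms(1) unfolding C1_def by blast
  have "\<And>x. ((\<lambda>x. c *\<^sub>R \<phi> x) has_derivative (\<lambda>h. c *\<^sub>R D x h)) (at x)"
    using D by (intro has_derivative_scaleR_right)
  from divg_eq[OF this] divg_eq[OF D] show ?thesis by (simp add: algebra_simps)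
qed

lemma divg_outside:
  assumes "C1 \<phi>" "x \<notin> closure {x. \<phi> x \<noteq> 0}"
  shows "divg \<phi> x = 0"
proof -
  obtain D where D: "\<And>x. (\<phi> has_derivative D x) (at x)"
    using assms(1) unfolding C1_def by blast
  have "((\<lambda>x. 0::R2) has_derivative (\<lambda>h. 0)) (at x)" by (rule has_derivative_const)
  hence "(\<phi> has_derivative (\<lambda>h. 0)) (at x)"
    by (rule has_derivative_transform_within_open[where s="- closure {x. \<phi> x \<noteq> 0}"])
       (use assms(2) in \<open>auto intro: closure_subset[THEN subsetD]\<close>)
  hence "D x = (\<lambda>h. 0)" using D has_derivative_unique by blast
  thus ?thesis using divg_eq[OF D, of x] by simp
qed

lemma C1c_L2_divg: "C1c \<phi> \<Longrightarrow> L2 (divg \<phi>)"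
  unfolding C1c_iff
  by (intro cont_compact_L2[where K="closure {x. \<phi> x \<noteq> 0}"] divg_cont divg_outside) auto

lemma C1c_bounded:
  assumes "C1c \<phi>"
  shows "\<exists>M>0. \<forall>x. norm (\<phi> x) \<le> M"
proof -
  let ?K = "closure {x. \<phi> x \<noteq> 0}"
  have cK: "compact ?K" using assms unfolding C1c_iff by blast
  have c: "continuous_on UNIV \<phi>" using assms C1_cont unfolding C1c_iff by blast
  have "continuous_on ?K \<phi>" using c by (rule continuous_on_subset) simp
  hence "compact (\<phi> ` ?K)" using cK by (rule compact_continuous_image)
  hence "bounded (\<phi> ` ?K)" by (rule compact_imp_bounded)
  then obtain B where B: "\<forall>y \<in> \<phi> ` ?K. norm y \<le> B"
    unfolding bounded_iff by blast
  have "\<forall>x. norm (\<phi> x) \<le> max B 0 + 1"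
  proof
    fix x show "norm (\<phi> x) \<le> max B 0 + 1"
    proof (cases "x \<in> ?K")
      case True
      hence "norm (\<phi> x) \<le> B" using B by blast
      thus ?thesis by linarith
    next
      case False
      hence "\<phi> x = 0" using closure_subset[of "{x. \<phi> x \<noteq> 0}"] by blast
      thus ?thesis by simp
    qed
  qed
  moreover have "max B 0 + 1 > 0" by linarith
  ultimately show ?thesis by blast
qed

lemma C1c_zero: "C1c (\<lambda>x. 0)"
  unfolding C1c_iff using C1_const by auto

lemma divg_zero: "divg (\<lambda>x. 0) x = 0"
  using divg_outside[OF C1_const] by simp



lemma TV_zero_D:
  assumes "TV_on U u = 0" "C1c \<phi>" "closure {x. \<phi> x \<noteq> 0} \<subseteq> U"
  shows "(LINT x|lebesgue. u x * divg \<phi> x) = 0"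
proof -
  let ?I = "LINT x|lebesgue. u x * divg \<phi> x"
  obtain M where M: "M > 0" "\<And>x. norm (\<phi> x) \<le> M" using C1c_bounded[OF assms(2)] by blast
  have key: "c * ?I \<le> 0" if c: "\<bar>c\<bar> = 1/M" for c
  proof -
    let ?\<psi> = "\<lambda>x. c *\<^sub>R \<phi> x"
    have cnz: "c \<noteq> 0" using c M by auto
    have eqs: "{x. ?\<psi> x \<noteq> 0} = {x. \<phi> x \<noteq> 0}" using cnz by auto
    have "C1c ?\<psi>" using assms(2) C1_scaleR[OF C1_const] eqs unfolding C1c_iff by auto
    moreover have "\<forall>x. norm (?\<psi> x) \<le> 1"
    proof
      fix x have "norm (?\<psi> x) = \<bar>c\<bar> * norm (\<phi> x)" by simp
      also have "\<dots> \<le> 1/M * M" using c M(2)[of x] M(1) by (intro mult_mono) auto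
      finally show "norm (?\<psi> x) \<le> 1" using M(1) by simp
    qed
    ultimately have "ereal (LINT x|lebesgue. u x * divg ?\<psi> x) \<le> TV_on U u"
      unfolding TV_on_def using assms(3) eqs by (intro SUP_upper) auto
    moreover have "(LINT x|lebesgue. u x * divg ?\<psi> x) = c * ?I"
    proof -
      have "(\<lambda>x. u x * divg ?\<psi> x) = (\<lambda>x. c * (u x * divg \<phi> x))"
        using divg_scale[of \<phi> c] assms(2) unfolding C1c_iff by (auto simp: fun_eq_iff)
      thus ?thesis by simp
    qed
    ultimately have "ereal (c * ?I) \<le> ereal 0" using assms(1) by (simp add: zero_ereal_def)
    thus ?thesis by simp
  qed
  have "1/M * ?I \<le> 0" using key[of "1/M"] M by simp
  moreover have "(-1/M) * ?I \<le> 0" using key[of "-1/M"] M by simp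
  ultimately have "?I \<le> 0" "?I \<ge> 0" using M(1) by (auto simp: mult_le_0_iff)
  thus ?thesis by simp
qed

lemma TV_zero_I:
  assumes "\<And>\<phi>. C1c \<phi> \<Longrightarrow> closure {x. \<phi> x \<noteq> 0} \<subseteq> U \<Longrightarrow> (LINT x|lebesgue. u x * divg \<phi> x) = 0"
  shows "TV_on U u = 0"
proof -
  let ?S = "{\<phi>. C1c \<phi> \<and> closure {x. \<phi> x \<noteq> 0} \<subseteq> U \<and> (\<forall>x. norm (\<phi> x) \<le> 1)}"
  have ne: "(\<lambda>x. 0) \<in> ?S" using C1c_zero by auto
  have "TV_on U u = (SUP \<phi> \<in> ?S. ereal 0)"
    unfolding TV_on_def using assms by (intro SUP_cong) auto
  also have "\<dots> = 0"
  proof -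
    have "?S \<noteq> {}" using ne by blast
    thus ?thesis by (simp add: zero_ereal_def)
  qed
  finally show ?thesis .
qed

lemma J_nonneg: "J u \<ge> 0"
proof -
  have "ereal (LINT x|lebesgue. u x * divg (\<lambda>x. 0) x) \<le> J u"
    unfolding J_def TV_on_def using C1c_zero by (intro SUP_upper) auto
  thus ?thesis by (simp add: divg_zero zero_ereal_def)
qed


lemma cutoff:
  fixes y :: R2
  assumes "0 < r" "r < R"
  obtains ch :: "R2 \<Rightarrow> real" where "C1 ch" "\<And>x. dist y x \<le> r \<Longrightarrow> ch x = 1"
    "\<And>x. R \<le> dist y x \<Longrightarrow> ch x = 0"
proof -
  define p where "p x = inner (x - y) (x - y)" for x
  have p: "p x = (dist y x)^2" for x
    unfolding p_def by (simp add: power2_norm_eq_inner dist_norm norm_minus_commute)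
  define A where "A x = qf (R^2 - p x)" for x
  define B where "B x = qf (p x - r^2)" for x
  have qf_nn: "qf t \<ge> 0" for t unfolding qf_def by auto
  have qf_pos: "t > 0 \<Longrightarrow> qf t > 0" for t unfolding qf_def by auto
  have qf_0: "t \<le> 0 \<Longrightarrow> qf t = 0" for t unfolding qf_def by auto
  have Cp: "C1 p" unfolding p_def[abs_def] by (rule C1_sqdist)
  have CA: "C1 A" unfolding A_def[abs_def] by (intro C1_qf C1_diff C1_const Cp)
  have CB: "C1 B" unfolding B_def[abs_def] by (intro C1_qf C1_diff C1_const Cp)
  have rR: "r^2 < R^2" using assms by (simp add: power_strict_mono)
  have pos: "A x + B x \<noteq> 0" for x
  proof (cases "p x \<le> r^2")
    case True
    hence "R^2 - p x > 0" using rR by linarith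
    hence "A x > 0" unfolding A_def by (rule qf_pos)
    moreover have "B x \<ge> 0" unfolding B_def by (rule qf_nn)
    ultimately show ?thesis by linarith
  next
    case False
    hence "p x - r^2 > 0" by linarith
    hence "B x > 0" unfolding B_def by (rule qf_pos)
    moreover have "A x \<ge> 0" unfolding A_def by (rule qf_nn)
    ultimately show ?thesis by linarith
  qed
  show ?thesis
  proof (rule that[of "\<lambda>x. A x / (A x + B x)"])
    show "C1 (\<lambda>x. A x / (A x + B x))" using CA CB pos by (intro C1_divide C1_add)
  next
    fix x assume "dist y x \<le> r"
    hence "p x \<le> r^2" unfolding p using power_mono[of "dist y x" r 2] by simp
    hence "B x = 0" unfolding B_def using qf_0 by auto
    thus "A x / (A x + B x) = 1" using pos[of x] by simp
  next
    fix x assume "R \<le> dist y x"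
    hence "R^2 \<le> p x" unfolding p using power_mono[of R "dist y x" 2] assms by linarith
    hence "A x = 0" unfolding A_def using qf_0 by auto
    thus "A x / (A x + B x) = 0" by simp
  qed
qed




lemma compact_closed_sub:
  assumes "compact K" "closed S" "S \<subseteq> K" shows "compact S"
proof -
  have "compact (K \<inter> S)" by (rule compact_Int_closed[OF assms(1) assms(2)])
  moreover have "K \<inter> S = S" using assms(3) by blast
  ultimately show ?thesis by simp
qed

lemma locality_finite:
  fixes u :: "R2 \<Rightarrow> real" and rad :: "R2 \<Rightarrow> real"
  assumes u: "L2 u" and F: "finite F" and rad: "\<And>z. z \<in> F \<Longrightarrow> rad z > 0"
    and loc: "\<And>z \<psi>. z \<in> F \<Longrightarrow> C1c \<psi> \<Longrightarrow> closure {x. \<psi> x \<noteq> 0} \<subseteq> cball z (2 * rad z)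
               \<Longrightarrow> (LINT x|lebesgue. u x * divg \<psi> x) = 0"
  shows "C1c \<phi> \<Longrightarrow> closure {x. \<phi> x \<noteq> 0} \<subseteq> (\<Union>z\<in>F. ball z (rad z))
         \<Longrightarrow> (LINT x|lebesgue. u x * divg \<phi> x) = 0"
  using F rad loc
proof (induction F arbitrary: \<phi> rule: finite_induct)
  case empty
  hence "\<And>x. \<phi> x = 0" using closure_subset[of "{x. \<phi> x \<noteq> 0}"] by auto
  hence "\<phi> = (\<lambda>x. 0)" by auto
  thus ?case by (simp add: divg_zero)
next
  case (insert z F)
  let ?K = "closure {x. \<phi> x \<noteq> 0}"
  have rz: "rad z > 0" using insert.prems by auto
  obtain ch :: "R2 \<Rightarrow> real" where ch: "C1 ch" "\<And>x. dist z x \<le> rad z \<Longrightarrow> ch x = 1"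
    "\<And>x. 2 * rad z \<le> dist z x \<Longrightarrow> ch x = 0"
    using cutoff[of "rad z" "2 * rad z" z] rz by auto
  define \<psi>1 where "\<psi>1 x = ch x *\<^sub>R \<phi> x" for x
  define \<psi>2 where "\<psi>2 x = \<phi> x - \<psi>1 x" for x
  have C1phi: "C1 \<phi>" and cK: "compact ?K" using insert.prems(1) unfolding C1c_iff by auto
  have C11: "C1 \<psi>1" unfolding \<psi>1_def[abs_def] by (intro C1_scaleR ch(1) C1phi)
  have C12: "C1 \<psi>2" unfolding \<psi>2_def[abs_def] by (intro C1_diff C11 C1phi)
  have s1: "{x. \<psi>1 x \<noteq> 0} \<subseteq> ?K \<inter> cball z (2 * rad z)"
  proof
    fix x assume "x \<in> {x. \<psi>1 x \<noteq> 0}"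
    hence "\<phi> x \<noteq> 0" "ch x \<noteq> 0" unfolding \<psi>1_def by auto
    thus "x \<in> ?K \<inter> cball z (2 * rad z)" using ch(3)[of x] closure_subset[of "{x. \<phi> x \<noteq> 0}"]
      by (force simp: dist_commute)
  qed
  have cl1: "closure {x. \<psi>1 x \<noteq> 0} \<subseteq> ?K \<inter> cball z (2 * rad z)"
    using closure_minimal[OF s1] by (simp add: closed_Int)
  have s2: "{x. \<psi>2 x \<noteq> 0} \<subseteq> ?K \<inter> (- ball z (rad z))"
  proof
    fix x assume "x \<in> {x. \<psi>2 x \<noteq> 0}"
    hence a: "\<phi> x \<noteq> 0" "ch x \<noteq> 1" unfolding \<psi>2_def \<psi>1_def by auto
    hence "\<not> dist z x \<le> rad z" using ch(2) by blast
    thus "x \<in> ?K \<inter> (- ball z (rad z))" using a(1) closure_subset[of "{x. \<phi> x \<noteq> 0}"] by auto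
  qed
  have cl2: "closure {x. \<psi>2 x \<noteq> 0} \<subseteq> ?K \<inter> (- ball z (rad z))"
    using closure_minimal[OF s2] by (simp add: closed_Int closed_Compl)
  have C1c1: "C1c \<psi>1" unfolding C1c_iff
    using C11 compact_closed_sub[OF cK closed_closure] cl1 by blast
  have C1c2: "C1c \<psi>2" unfolding C1c_iff
    using C12 compact_closed_sub[OF cK closed_closure] cl2 by blast
  have I1: "(LINT x|lebesgue. u x * divg \<psi>1 x) = 0"
    using insert.prems(4)[of z \<psi>1] C1c1 cl1 by auto
  have "closure {x. \<psi>2 x \<noteq> 0} \<subseteq> (\<Union>z\<in>F. ball z (rad z))"
    using cl2 insert.prems(2) by auto
  moreover have rF: "\<And>z. z \<in> F \<Longrightarrow> rad z > 0" using insert.prems(3) by blast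
  moreover have lF: "\<And>z \<psi>. z \<in> F \<Longrightarrow> C1c \<psi> \<Longrightarrow> closure {x. \<psi> x \<noteq> 0} \<subseteq> cball z (2 * rad z)
               \<Longrightarrow> (LINT x|lebesgue. u x * divg \<psi> x) = 0" using insert.prems(4) by blast
  ultimately have I2: "(LINT x|lebesgue. u x * divg \<psi>2 x) = 0"
    using insert.IH[of \<psi>2] C1c2 by blast
  have phi: "\<phi> = (\<lambda>x. \<psi>1 x + \<psi>2 x)" unfolding \<psi>2_def by auto
  have "(\<lambda>x. u x * divg \<phi> x) = (\<lambda>x. u x * divg \<psi>1 x + u x * divg \<psi>2 x)"
    by (subst phi) (simp add: divg_add[OF C11 C12] distrib_left)
  moreover have "integrable lebesgue (\<lambda>x. u x * divg \<psi>1 x)"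
    using L2_mult_integrable[OF u C1c_L2_divg[OF C1c1]] .
  moreover have "integrable lebesgue (\<lambda>x. u x * divg \<psi>2 x)"
    using L2_mult_integrable[OF u C1c_L2_divg[OF C1c2]] .
  ultimately show ?case using I1 I2 by simp
qed


lemma locality:
  fixes u :: "R2 \<Rightarrow> real"
  assumes u: "L2 u" and phi: "C1c \<phi>"
    and sub: "closure {x. \<phi> x \<noteq> 0} \<subseteq> \<Union>{V. open V \<and> TV_on V u = 0}"
  shows "(LINT x|lebesgue. u x * divg \<phi> x) = 0"
proof -
  let ?K = "closure {x. \<phi> x \<noteq> 0}"
  let ?P = "\<lambda>z e. e > 0 \<and> (\<exists>V. open V \<and> TV_on V u = 0 \<and> cball z (2 * e) \<subseteq> V)"
  have ex: "\<exists>e. ?P z e" if "z \<in> ?K" for z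
  proof -
    have "z \<in> \<Union>{V. open V \<and> TV_on V u = 0}" using sub that by (rule subsetD)
    then obtain V where V0: "V \<in> {V. open V \<and> TV_on V u = 0}" "z \<in> V" by (rule UnionE)
    have V: "open V" "TV_on V u = 0" "z \<in> V" using V0 by auto
    obtain e where e: "e > 0" "ball z e \<subseteq> V" using openE[OF V(1) V(3)] by blast
    have "cball z (2 * (e/3)) \<subseteq> ball z e" using e(1) by (simp add: cball_subset_ball_iff)
    hence "cball z (2 * (e/3)) \<subseteq> V" using e(2) by blast
    moreover have "e/3 > 0" using e(1) by simp
    ultimately show ?thesis using V(1,2) by blast
  qed
  define rad where "rad z = (SOME e. ?P z e)" for z
  have radP: "?P z (rad z)" if "z \<in> ?K" for z
    unfolding rad_def using someI_ex[OF ex[OF that]] .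
  have cK: "compact ?K" using phi unfolding C1c_iff by blast
  obtain F where F: "F \<subseteq> ?K" "finite F" "?K \<subseteq> (\<Union>z\<in>F. ball z (rad z))"
  proof (rule compactE_image[OF cK, of ?K "\<lambda>z. ball z (rad z)"])
    show "?K \<subseteq> (\<Union>z\<in>?K. ball z (rad z))"
    proof
      fix z assume z: "z \<in> ?K"
      hence "rad z > 0" using radP by blast
      hence "z \<in> ball z (rad z)" by simp
      thus "z \<in> (\<Union>z\<in>?K. ball z (rad z))" using z by blast
    qed
  next
    fix T show "open (ball T (rad T))" by simp
  next
    fix C' assume "C' \<subseteq> ?K" "finite C'" "?K \<subseteq> (\<Union>z\<in>C'. ball z (rad z))"
    thus thesis using that by blast
  qed
  show ?thesis
  proof (rule locality_finite[OF u F(2) _ _ phi F(3)])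
    fix z assume "z \<in> F" thus "rad z > 0" using radP F(1) by blast
  next
    fix z \<psi> assume z: "z \<in> F" and psi: "C1c \<psi>" "closure {x. \<psi> x \<noteq> 0} \<subseteq> cball z (2 * rad z)"
    obtain V where V: "open V" "TV_on V u = 0" "cball z (2 * rad z) \<subseteq> V"
      using radP[of z] z F(1) by blast
    show "(LINT x|lebesgue. u x * divg \<psi> x) = 0"
      using TV_zero_D[OF V(2) psi(1)] psi(2) V(3) by blast
  qed
qed

lemma L2_sq_add_bound:
  assumes "L2 a" "L2 b"
  shows "(LINT x|lebesgue. (a x + b x)^2) \<le> 2 * (LINT x|lebesgue. (a x)^2) + 2 * (LINT x|lebesgue. (b x)^2)"
proof -
  have "(LINT x|lebesgue. (a x + b x)^2) \<le> (LINT x|lebesgue. 2 * (a x)^2 + 2 * (b x)^2)"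
  proof (rule integral_mono)
    show "integrable lebesgue (\<lambda>x. (a x + b x)^2)" using L2_add[OF assms] unfolding L2_def by auto
    show "integrable lebesgue (\<lambda>x. 2 * (a x)^2 + 2 * (b x)^2)" using assms unfolding L2_def by auto
    fix x show "(a x + b x)^2 \<le> 2 * (a x)^2 + 2 * (b x)^2"
      using sum_squares_bound[of "a x" "b x"] by (simp add: power2_eq_square algebra_simps)
  qed
  also have "\<dots> = 2 * (LINT x|lebesgue. (a x)^2) + 2 * (LINT x|lebesgue. (b x)^2)"
    using assms unfolding L2_def by simp
  finally show ?thesis .
qed

lemma limit_zero_freq:
  fixes T :: "nat \<Rightarrow> real"
  assumes "T \<longlonglongrightarrow> t" "frequently (\<lambda>n. T n = 0) sequentially"
  shows "t = 0"
proof (rule ccontr)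
  assume "t \<noteq> 0"
  hence "eventually (\<lambda>n. T n \<noteq> 0) sequentially" using tendsto_imp_eventually_ne[OF assms(1)] by blast
  thus False using assms(2) unfolding frequently_def by (simp add: eventually_mono)
qed

lemma L2_conv_pairing:
  fixes u :: "nat \<Rightarrow> R2 \<Rightarrow> real"
  assumes u: "\<And>n. L2 (u n)" and f: "L2 f" and g: "L2 g"
    and S: "(\<lambda>n. LINT x|lebesgue. (u n x - f x)^2) \<longlonglongrightarrow> 0"
  shows "(\<lambda>n. LINT x|lebesgue. u n x * g x) \<longlonglongrightarrow> (LINT x|lebesgue. f x * g x)"
proof (rule LIMSEQ_I)
  fix r :: real assume r: "r > 0"
  define G where "G = (LINT x|lebesgue. (g x)^2)"
  have G0: "G \<ge> 0" unfolding G_def by simp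
  define s where "s = (G + 1) / r"
  have s: "s > 0" unfolding s_def using G0 r by simp
  have small: "1/(2 * s) * G < r/2"
  proof -
    have "1/(2 * s) * G = G * r / (2 * (G + 1))" unfolding s_def using r G0 by (simp add: field_simps)
    also have "\<dots> < r / 2" using r G0 by (simp add: field_simps)
    finally show ?thesis .
  qed
  have "eventually (\<lambda>n. norm ((LINT x|lebesgue. (u n x - f x)^2) - 0) < r / s) sequentially"
    using S[THEN tendstoD, of "r/s"] r s by (simp add: dist_norm)
  then obtain N where N: "\<And>n. n \<ge> N \<Longrightarrow> \<bar>LINT x|lebesgue. (u n x - f x)^2\<bar> < r / s"
    unfolding eventually_sequentially by auto
  show "\<exists>N. \<forall>n\<ge>N. norm ((LINT x|lebesgue. u n x * g x) - (LINT x|lebesgue. f x * g x)) < r"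
  proof (intro exI allI impI)
    fix n assume n: "n \<ge> N"
    have d: "(LINT x|lebesgue. u n x * g x) - (LINT x|lebesgue. f x * g x) = (LINT x|lebesgue. (u n x - f x) * g x)"
      using L2_mult_integrable[OF u g] L2_mult_integrable[OF f g] by (simp add: left_diff_distrib)
    have "\<bar>(LINT x|lebesgue. (u n x - f x) * g x)\<bar> \<le> s/2 * (LINT x|lebesgue. (u n x - f x)^2) + 1/(2 * s) * G"
      unfolding G_def using L2_CS[OF L2_diff[OF u f] g s] .
    also have "s/2 * (LINT x|lebesgue. (u n x - f x)^2) \<le> s/2 * (r / s)"
      using N[OF n] s by (intro mult_left_mono) auto
    hence "s/2 * (LINT x|lebesgue. (u n x - f x)^2) + 1/(2 * s) * G < s/2 * (r/s) + r/2"
      using small by linarith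
    also have "s/2 * (r/s) + r/2 = r" using s by simp
    finally show "norm ((LINT x|lebesgue. u n x * g x) - (LINT x|lebesgue. f x * g x)) < r"
      using d by simp
  qed
qed



theorem mainTheorem11:
  fixes f :: "R2 \<Rightarrow> real" and w u :: "nat \<Rightarrow> R2 \<Rightarrow> real" and lam :: "nat \<Rightarrow> real"
  assumes "L2 f" and "J f < \<infinity>"
    and "\<And>n. L2 (w n)" and "(\<lambda>n. L2norm (w n)) \<longlonglongrightarrow> 0"
    and "\<And>n. lam n > 0" and "lam \<longlonglongrightarrow> 0"
    and "\<And>n. is_minimizer (lam n) (\<lambda>x. f x + w n x) (u n)"
  shows "(\<lambda>n. L2norm (\<lambda>x. u n x - f x)) \<longlonglongrightarrow> 0
         \<and> suppD f \<subseteq> PK_liminf (\<lambda>n. suppD (u n))"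
proof -
  note fL2 = assms(1) and wL2 = assms(3) and lampos = assms(5)
  have uL2: "L2 (u n)" for n using assms(7)[of n] unfolding is_minimizer_def by blast
  obtain jf where jf: "J f = ereal jf" "jf \<ge> 0"
    using J_nonneg[of f] assms(2) by (cases "J f") auto
  define S where "S n = (LINT x|lebesgue. (u n x - f x)^2)" for n
  define W where "W n = (LINT x|lebesgue. (w n x)^2)" for n
  have S0: "S n \<ge> 0" for n unfolding S_def by simp
  have Sbound: "S n \<le> 4 * (lam n * jf) + 4 * W n" for n
  proof -
    let ?a = "\<lambda>x. u n x - (f x + w n x)"
    have aL2: "L2 ?a" using L2_diff[OF uL2 L2_add[OF fL2 wL2]] .
    have min: "ereal (lam n) * J (u n) + ereal ((L2norm ?a)\<^sup>2 / 2)
           \<le> ereal (lam n) * J f + ereal ((L2norm (\<lambda>x. f x - (f x + w n x)))\<^sup>2 / 2)"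
      using assms(7)[of n] fL2 unfolding is_minimizer_def by blast
    have q1: "(L2norm (\<lambda>x. f x - (f x + w n x)))\<^sup>2 = W n"
      unfolding L2norm_sq W_def by simp
    have q2: "(L2norm ?a)\<^sup>2 = (LINT x|lebesgue. (?a x)^2)" by (rule L2norm_sq)
    have X0: "0 \<le> ereal (lam n) * J (u n)"
      using J_nonneg[of "u n"] lampos[of n] by simp
    have e1: "ereal (lam n) * J f + ereal (W n / 2) = ereal (lam n * jf + W n / 2)"
      using jf(1) by simp
    have e2: "ereal ((LINT x|lebesgue. (?a x)^2) / 2) \<le> ereal (lam n) * J (u n) + ereal ((LINT x|lebesgue. (?a x)^2) / 2)"
      by (rule add_increasing[OF X0 order_refl])
    have "ereal ((LINT x|lebesgue. (?a x)^2) / 2) \<le> ereal (lam n * jf + W n / 2)"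
      using e2 min unfolding q1 q2 e1 by (rule order_trans)
    hence A: "(LINT x|lebesgue. (?a x)^2) \<le> 2 * (lam n * jf) + W n" by simp
    have "S n = (LINT x|lebesgue. (?a x + w n x)^2)" unfolding S_def by simp
    also have "\<dots> \<le> 2 * (LINT x|lebesgue. (?a x)^2) + 2 * W n"
      unfolding W_def by (rule L2_sq_add_bound[OF aL2 wL2])
    finally show ?thesis using A by linarith
  qed
  have W_lim: "W \<longlonglongrightarrow> 0"
  proof -
    have "(\<lambda>n. (L2norm (w n))^2) \<longlonglongrightarrow> 0^2" by (intro tendsto_intros assms(4))
    moreover have "(\<lambda>n. (L2norm (w n))^2) = W" unfolding W_def[abs_def] L2norm_sq by simp
    ultimately show ?thesis by simp
  qed
  have S_lim: "S \<longlonglongrightarrow> 0"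
  proof (rule tendsto_sandwich[of "\<lambda>n. 0" _ _ "\<lambda>n. 4 * (lam n * jf) + 4 * W n"])
    show "eventually (\<lambda>n. 0 \<le> S n) sequentially" using S0 by simp
    show "eventually (\<lambda>n. S n \<le> 4 * (lam n * jf) + 4 * W n) sequentially" using Sbound by simp
    show "(\<lambda>n. 0) \<longlonglongrightarrow> (0::real)" by simp
    have "(\<lambda>n. 4 * (lam n * jf) + 4 * W n) \<longlonglongrightarrow> 4 * (0 * jf) + 4 * 0"
      by (intro tendsto_intros assms(6) W_lim)
    thus "(\<lambda>n. 4 * (lam n * jf) + 4 * W n) \<longlonglongrightarrow> 0" by simp
  qed
  have part1: "(\<lambda>n. L2norm (\<lambda>x. u n x - f x)) \<longlonglongrightarrow> 0"
  proof -
    have "(\<lambda>n. sqrt (S n)) \<longlonglongrightarrow> sqrt 0" by (intro tendsto_intros S_lim)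
    moreover have "(\<lambda>n. sqrt (S n)) = (\<lambda>n. L2norm (\<lambda>x. u n x - f x))"
      unfolding S_def[abs_def] L2norm_def by simp
    ultimately show ?thesis by simp
  qed
  have part2: "suppD f \<subseteq> PK_liminf (\<lambda>n. suppD (u n))"
  proof
    fix x assume xf: "x \<in> suppD f"
    show "x \<in> PK_liminf (\<lambda>n. suppD (u n))"
      unfolding PK_liminf_def
    proof (intro CollectI allI impI)
      fix e :: real assume e: "e > 0"
      show "eventually (\<lambda>n. \<exists>y\<in>suppD (u n). dist x y < e) sequentially"
      proof (rule ccontr)
      assume ne: "\<not> eventually (\<lambda>n. \<exists>y\<in>suppD (u n). dist x y < e) sequentially"
      have freq: "frequently (\<lambda>n. \<forall>y\<in>suppD (u n). \<not> dist x y < e) sequentially"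
        using ne unfolding frequently_def by simp
      have "TV_on (ball x (e/2)) f = 0"
      proof (rule TV_zero_I)
        fix \<phi> assume phi: "C1c \<phi>" "closure {x. \<phi> x \<noteq> 0} \<subseteq> ball x (e/2)"
        have gL2: "L2 (divg \<phi>)" using C1c_L2_divg[OF phi(1)] .
        have lim: "(\<lambda>n. LINT y|lebesgue. u n y * divg \<phi> y) \<longlonglongrightarrow> (LINT y|lebesgue. f y * divg \<phi> y)"
          using L2_conv_pairing[of u f "divg \<phi>", OF uL2 fL2 gL2] S_lim unfolding S_def[abs_def] by blast
        have H2: "\<forall>n. (\<forall>y\<in>suppD (u n). \<not> dist x y < e) \<longrightarrow> (LINT y|lebesgue. u n y * divg \<phi> y) = 0"
        proof (intro allI impI)
          fix n assume H: "\<forall>y\<in>suppD (u n). \<not> dist x y < e"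
          have "closure {x. \<phi> x \<noteq> 0} \<subseteq> \<Union>{V. open V \<and> TV_on V (u n) = 0}"
          proof
            fix z assume "z \<in> closure {x. \<phi> x \<noteq> 0}"
            hence "dist x z < e/2" using phi(2) by auto
            hence "z \<notin> suppD (u n)" using H e by force
            thus "z \<in> \<Union>{V. open V \<and> TV_on V (u n) = 0}" unfolding suppD_def by blast
          qed
          thus "(LINT y|lebesgue. u n y * divg \<phi> y) = 0" by (rule locality[OF uL2 phi(1)])
        qed
        have "frequently (\<lambda>n. (LINT y|lebesgue. u n y * divg \<phi> y) = 0) sequentially"
          using frequently_mono[OF H2 freq] .
        thus "(LINT y|lebesgue. f y * divg \<phi> y) = 0" by (rule limit_zero_freq[OF lim])
      qed
      hence "x \<notin> suppD f" unfolding suppD_def using e by auto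
      thus False using xf by blast
    qed
    qed
  qed
  show ?thesis using part1 part2 by blast
qed


end
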